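(* Let $p$ be a prime and $G$ a $p$-group containing a normal abelian subgroup $A$ such that $C_G(A)$ has finite index in $G$. Assume that $A$ contains a $G$-invariant divisible Chernikov subgroup $D$. Then $A$ contains a $G$-invariant subgroup $S$ such that $A=SD$ and $S\cap D$ is finite. *)

theory Defs
  imports "HOL-Algebra.Algebra"
begin

definition p_group :: "nat \<Rightarrow> ('a, 'b) monoid_scheme \<Rightarrow> bool" where
  "p_group p G \<longleftrightarrow> group G \<and> (\<forall>x \<in> carrier G. \<exists>k::nat. x [^]\<^bsub>G\<^esub> (p ^ k) = \<one>\<^bsub>G\<^esub>)"

definition centralizer :: "('a, 'b) monoid_scheme \<Rightarrow> 'a set \<Rightarrow> 'a set" where
  "centralizer G A = {g \<in> carrier G. \<forall>a \<in> A. g \<otimes>\<^bsub>G\<^esub> a = a \<otimes>\<^bsub>G\<^esub> g}"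

definition commutative_subgroup :: "'a set \<Rightarrow> ('a, 'b) monoid_scheme \<Rightarrow> bool" where
  "commutative_subgroup A G \<longleftrightarrow> subgroup A G \<and> (\<forall>x \<in> A. \<forall>y \<in> A. x \<otimes>\<^bsub>G\<^esub> y = y \<otimes>\<^bsub>G\<^esub> x)"

definition divisible_subgroup :: "'a set \<Rightarrow> ('a, 'b) monoid_scheme \<Rightarrow> bool" where
  "divisible_subgroup D G \<longleftrightarrow> subgroup D G \<and>
     (\<forall>d \<in> D. \<forall>n::nat. n \<ge> 1 \<longrightarrow> (\<exists>e \<in> D. e [^]\<^bsub>G\<^esub> n = d))"

definition quasicyclic_subgroup :: "'a set \<Rightarrow> ('a, 'b) monoid_scheme \<Rightarrow> bool" where
  "quasicyclic_subgroup Q G \<longleftrightarrow> subgroup Q G \<and>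
     (\<exists>q::nat. \<exists>x :: nat \<Rightarrow> 'a. Factorial_Ring.prime q \<and> range x \<subseteq> carrier G \<and>
        x 0 = \<one>\<^bsub>G\<^esub> \<and> x 1 \<noteq> \<one>\<^bsub>G\<^esub> \<and>
        (\<forall>n. x (Suc n) [^]\<^bsub>G\<^esub> q = x n) \<and>
        Q = generate G (range x))"

definition internal_direct_product :: "'a set \<Rightarrow> 'a set list \<Rightarrow> ('a, 'b) monoid_scheme \<Rightarrow> bool" where
  "internal_direct_product N Qs G \<longleftrightarrow>
     (\<forall>Q \<in> set Qs. subgroup Q G) \<and>
     (\<forall>i j. i < length Qs \<longrightarrow> j < length Qs \<longrightarrow> i \<noteq> j \<longrightarrow>
        (\<forall>x \<in> Qs ! i. \<forall>y \<in> Qs ! j. x \<otimes>\<^bsub>G\<^esub> y = y \<otimes>\<^bsub>G\<^esub> x)) \<and>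
     bij_betw (\<lambda>xs. foldr (\<otimes>\<^bsub>G\<^esub>) xs \<one>\<^bsub>G\<^esub>)
        {xs. length xs = length Qs \<and> (\<forall>i < length xs. xs ! i \<in> Qs ! i)} N"

definition chernikov_subgroup :: "'a set \<Rightarrow> ('a, 'b) monoid_scheme \<Rightarrow> bool" where
  "chernikov_subgroup D G \<longleftrightarrow> subgroup D G \<and>
     (\<exists>N Qs. N \<lhd> (G\<lparr>carrier := D\<rparr>) \<and> finite (rcosets\<^bsub>G\<lparr>carrier := D\<rparr>\<^esub> N) \<and>
        (\<forall>Q \<in> set Qs. quasicyclic_subgroup Q G) \<and> internal_direct_product N Qs G)"

end

theory Submission
  imports Defs
begin


lemma (in group) mi1: "x \<in> carrier G \<Longrightarrow> y \<in> carrier G \<Longrightarrow> x \<otimes> (inv x \<otimes> y) = y"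
  by (simp add: m_assoc[symmetric])
lemma (in group) mi2: "x \<in> carrier G \<Longrightarrow> y \<in> carrier G \<Longrightarrow> inv x \<otimes> (x \<otimes> y) = y"
  by (simp add: m_assoc[symmetric])
lemma (in comm_group) cg_aux1:
  assumes "u\<in>carrier G" "v\<in>carrier G" "x\<in>carrier G" "x'\<in>carrier G" "u \<otimes> x = v \<otimes> x'"
  shows "u \<otimes> inv v = x' \<otimes> inv x"
proof -
  have "u \<otimes> inv v = (u \<otimes> x) \<otimes> (inv x \<otimes> inv v)" using assms(1-4) by (simp add: m_assoc mi1)
  also have "... = (v \<otimes> x') \<otimes> (inv x \<otimes> inv v)" using assms by simp
  also have "... = (x' \<otimes> v) \<otimes> (inv v \<otimes> inv x)" using assms(1-4) m_comm[of v x'] m_comm[of "inv x" "inv v"] by simp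
  also have "... = x' \<otimes> inv x" using assms(1-4) by (simp add: m_assoc mi1)
  finally show ?thesis .
qed
lemma (in comm_group) cg_aux2:
  assumes "u\<in>carrier G" "v\<in>carrier G" "x\<in>carrier G" "x'\<in>carrier G" "u \<otimes> inv v = x' \<otimes> inv x"
  shows "u \<otimes> x = v \<otimes> x'"
proof -
  have "u \<otimes> x = (u \<otimes> inv v) \<otimes> (v \<otimes> x)" using assms(1-4) by (simp add: m_assoc mi2)
  also have "... = (x' \<otimes> inv x) \<otimes> (x \<otimes> v)" using assms m_comm[of v x] by simp
  also have "... = x' \<otimes> v" using assms(1-4) by (simp add: m_assoc mi2)
  also have "... = v \<otimes> x'" using assms(1-4) m_comm by simp
  finally show ?thesis .
qed

lemma (in group) pow_in_graph:
  assumes cl1: "(\<one>, \<one>) \<in> M"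
    and clm: "\<And>x y x' y'. (x,y) \<in> M \<Longrightarrow> (x',y') \<in> M \<Longrightarrow> (x \<otimes> x', y \<otimes> y') \<in> M"
    and cli: "\<And>x y. (x,y) \<in> M \<Longrightarrow> (inv x, inv y) \<in> M"
    and xy: "(x,y) \<in> M"
  shows "(x [^] (k::int), y [^] k) \<in> M"
proof -
  have nat: "(x [^] (n::nat), y [^] n) \<in> M" for n
    by (induction n) (auto simp: cl1 clm xy)
  show ?thesis
  proof (cases "k < 0")
    case True
    have "x [^] k = inv (x [^] nat (-k))" "y [^] k = inv (y [^] nat (-k))"
      by (simp only: int_pow_def2[of G x k] int_pow_def2[of G y k] True if_True)+
    then show ?thesis using cli[OF nat[of "nat (-k)"]] by simp
  next
    case False
    have "x [^] k = x [^] nat k" "y [^] k = y [^] nat k"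
      by (simp only: int_pow_def2[of G x k] int_pow_def2[of G y k] False if_False)+
    then show ?thesis using nat[of "nat k"] by simp
  qed
qed

lemma (in comm_group) divisible_retract:
  assumes DS: "subgroup D G"
    and div: "\<And>d n. d \<in> D \<Longrightarrow> (n::nat) \<ge> 1 \<Longrightarrow> \<exists>e\<in>D. e [^] n = d"
  shows "\<exists>\<pi>. (\<forall>x\<in>carrier G. \<pi> x \<in> D) \<and> (\<forall>x\<in>carrier G. \<forall>y\<in>carrier G. \<pi> (x \<otimes> y) = \<pi> x \<otimes> \<pi> y) \<and> (\<forall>d\<in>D. \<pi> d = d)"
proof -
  have Dc: "D \<subseteq> carrier G" using DS subgroup.subset by blast
  define GR where "GR = {M. M \<subseteq> carrier G \<times> D \<and> (\<forall>d\<in>D. (d,d) \<in> M)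
     \<and> (\<forall>x y x' y'. (x,y) \<in> M \<longrightarrow> (x',y') \<in> M \<longrightarrow> (x \<otimes> x', y \<otimes> y') \<in> M)
     \<and> (\<forall>x y. (x,y) \<in> M \<longrightarrow> (inv x, inv y) \<in> M)
     \<and> (\<forall>x y y'. (x,y) \<in> M \<longrightarrow> (x,y') \<in> M \<longrightarrow> y = y')}"
  have D0: "{(d,d) | d. d \<in> D} \<in> GR"
    unfolding GR_def
    apply (rule CollectI)
    apply (intro conjI)
    using Dc subgroup.m_closed[OF DS] subgroup.m_inv_closed[OF DS] by blast+
  have "\<forall>C\<in>Zorn.chains GR. \<exists>U\<in>GR. \<forall>Y\<in>C. Y \<subseteq> U"
  proof
    fix C assume C: "C \<in> Zorn.chains GR"
    show "\<exists>U\<in>GR. \<forall>Y\<in>C. Y \<subseteq> U"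
    proof (cases "C = {}")
      case True then show ?thesis using D0 by auto
    next
      case False
      have ch: "\<And>Y1 Y2. Y1 \<in> C \<Longrightarrow> Y2 \<in> C \<Longrightarrow> Y1 \<subseteq> Y2 \<or> Y2 \<subseteq> Y1"
        using C by (auto simp: chains_def chain_subset_def)
      have sub: "\<And>Y. Y \<in> C \<Longrightarrow> Y \<in> GR" using C by (auto simp: chains_def)
      have s1: "\<And>Y. Y \<in> C \<Longrightarrow> Y \<subseteq> carrier G \<times> D" using sub unfolding GR_def by blast
      have s2: "\<And>Y d. Y \<in> C \<Longrightarrow> d \<in> D \<Longrightarrow> (d,d) \<in> Y" using sub unfolding GR_def by blast
      have s3: "\<And>Y x y x' y'. Y \<in> C \<Longrightarrow> (x,y) \<in> Y \<Longrightarrow> (x',y') \<in> Y \<Longrightarrow> (x \<otimes> x', y \<otimes> y') \<in> Y"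
        using sub unfolding GR_def by blast
      have s4: "\<And>Y x y. Y \<in> C \<Longrightarrow> (x,y) \<in> Y \<Longrightarrow> (inv x, inv y) \<in> Y"
        using sub unfolding GR_def by blast
      have s5: "\<And>Y x y y'. Y \<in> C \<Longrightarrow> (x,y) \<in> Y \<Longrightarrow> (x,y') \<in> Y \<Longrightarrow> y = y'"
        using sub unfolding GR_def by blast
      have "\<Union>C \<in> GR"
        unfolding GR_def
      proof (intro CollectI conjI allI impI ballI)
        show "\<Union>C \<subseteq> carrier G \<times> D" using s1 by blast
      next
        fix d assume "d \<in> D"
        then show "(d,d) \<in> \<Union>C" using s2 False by blast
      next
        fix x y x' y' assume a: "(x,y) \<in> \<Union>C" "(x',y') \<in> \<Union>C"
        then obtain Y1 Y2 where X: "Y1 \<in> C" "(x,y) \<in> Y1" and Y: "Y2 \<in> C" "(x',y') \<in> Y2" by blast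
        show "(x \<otimes> x', y \<otimes> y') \<in> \<Union>C"
        proof (cases "Y1 \<subseteq> Y2")
          case True then show ?thesis using X Y s3[of Y2] by blast
        next
          case False then have "Y2 \<subseteq> Y1" using ch X Y by blast
          then show ?thesis using X Y s3[of Y1] by blast
        qed
      next
        fix x y assume "(x,y) \<in> \<Union>C"
        then show "(inv x, inv y) \<in> \<Union>C" using s4 by blast
      next
        fix x y y' assume a: "(x,y) \<in> \<Union>C" "(x,y') \<in> \<Union>C"
        then obtain Y1 Y2 where X: "Y1 \<in> C" "(x,y) \<in> Y1" and Y: "Y2 \<in> C" "(x,y') \<in> Y2" by blast
        show "y = y'"
        proof (cases "Y1 \<subseteq> Y2")
          case True then show ?thesis using X Y s5[of Y2] by blast
        next
          case False then have "Y2 \<subseteq> Y1" using ch X Y by blast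
          then show ?thesis using X Y s5[of Y1] by blast
        qed
      qed
      then show ?thesis by blast
    qed
  qed
  from Zorn_Lemma2[OF this] obtain M where M: "M \<in> GR" and max: "\<And>Y. Y \<in> GR \<Longrightarrow> M \<subseteq> Y \<Longrightarrow> Y = M"
    by blast
  have Msub: "M \<subseteq> carrier G \<times> D" and Md: "\<And>d. d \<in> D \<Longrightarrow> (d,d) \<in> M"
    and Mm: "\<And>x y x' y'. (x,y) \<in> M \<Longrightarrow> (x',y') \<in> M \<Longrightarrow> (x \<otimes> x', y \<otimes> y') \<in> M"
    and Mi: "\<And>x y. (x,y) \<in> M \<Longrightarrow> (inv x, inv y) \<in> M"
    and Mf: "\<And>x y y'. (x,y) \<in> M \<Longrightarrow> (x,y') \<in> M \<Longrightarrow> y = y'"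
    using M by (auto simp: GR_def)
  have M11: "(\<one>,\<one>) \<in> M" using Md DS subgroup.one_closed by blast
  have Mp: "\<And>x y k. (x,y) \<in> M \<Longrightarrow> (x [^] (k::int), y [^] k) \<in> M"
    using pow_in_graph[OF M11] Mm Mi by blast
  have total: "a \<in> fst ` M" if a: "a \<in> carrier G" for a
  proof (rule ccontr)
    assume na: "a \<notin> fst ` M"
    have "\<exists>e\<in>D. \<forall>k y. (a [^] (k::int), y) \<in> M \<longrightarrow> y = e [^] k"
    proof (cases "\<exists>n::nat. n > 0 \<and> a [^] n \<in> fst ` M")
      case False
      have "\<forall>k y. (a [^] (k::int), y) \<in> M \<longrightarrow> y = \<one> [^] k"
      proof (intro allI impI)
        fix k y assume ky: "(a [^] (k::int), y) \<in> M"
        have "k = 0"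
        proof (rule ccontr)
          assume "k \<noteq> 0"
          then have "nat \<bar>k\<bar> > 0" by simp
          moreover have "a [^] nat \<bar>k\<bar> \<in> fst ` M"
          proof (cases "k < 0")
            case True
            then have "k = - int (nat \<bar>k\<bar>)" by simp
            then have "a [^] k = inv (a [^] nat \<bar>k\<bar>)" using a int_pow_neg_int by metis
            then have "inv (a [^] k) = a [^] nat \<bar>k\<bar>" using a by simp
            then show ?thesis using Mi[OF ky] by (metis fst_conv image_eqI)
          next
            case False
            then have "a [^] nat \<bar>k\<bar> = a [^] k" using pow_nat[of k] by simp
            then show ?thesis using ky by (metis fst_conv image_eqI)
          qed
          ultimately show False using False by blast
        qed
        then show "y = \<one> [^] k" using ky Mf M11 by simp
      qed
      then show ?thesis using DS subgroup.one_closed by blast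
    next
      case True
      define m where "m = (LEAST n::nat. n > 0 \<and> a [^] n \<in> fst ` M)"
      have m: "m > 0" "a [^] m \<in> fst ` M" using LeastI_ex[OF True] unfolding m_def by auto
      have mmin: "\<And>r. 0 < r \<Longrightarrow> r < m \<Longrightarrow> a [^] r \<notin> fst ` M"
        using not_less_Least unfolding m_def by blast
      obtain ym where ym: "(a [^] m, ym) \<in> M" using m by force
      have ymD: "ym \<in> D" using ym Msub by blast
      obtain e where eD: "e \<in> D" and em: "e [^] m = ym" using div[OF ymD, of m] m by auto
      have ec: "e \<in> carrier G" using eD Dc by blast
      show ?thesis
      proof (intro bexI[OF _ eD] allI impI)
        fix k y assume ky: "(a [^] (k::int), y) \<in> M"
        have yc: "y \<in> carrier G" using ky Msub Dc by blast
        have ymc: "ym \<in> carrier G" using ymD Dc by blast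
        define q where "q = k div int m"
        define r where "r = k mod int m"
        have kqr: "k = int m * q + r" by (simp add: q_def r_def)
        have r0: "0 \<le> r" "r < int m" using m by (simp_all add: r_def)
        have mq: "(a [^] (int m * q), ym [^] q) \<in> M"
          using Mp[OF ym, of q] a by (simp add: int_pow_pow int_pow_int[symmetric])
        have "(a [^] k \<otimes> inv (a [^] (int m * q)), y \<otimes> inv (ym [^] q)) \<in> M"
          using Mm[OF ky Mi[OF mq]] .
        moreover have "a [^] k \<otimes> inv (a [^] (int m * q)) = a [^] r"
          using a kqr by (simp add: int_pow_diff[symmetric])
        ultimately have rM: "(a [^] r, y \<otimes> inv (ym [^] q)) \<in> M" by simp
        have "r = 0"
        proof (rule ccontr)
          assume "r \<noteq> 0"
          then have "0 < nat r" "nat r < m" using r0 by auto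
          moreover have "a [^] nat r \<in> fst ` M" using rM pow_nat[OF r0(1), of G a] by (metis fst_conv image_eqI)
          ultimately show False using mmin by blast
        qed
        then have "y \<otimes> inv (ym [^] q) = \<one>" using rM Mf M11 by simp
        then have "y = \<one> \<otimes> ym [^] q" using inv_solve_right'[of "\<one>" y "ym [^] q"] yc ymc by simp
        also have "... = ym [^] q" using ymc by simp
        also have "... = (e [^] int m) [^] q" using em int_pow_int[of G e m] by simp
        also have "... = e [^] k"
          using kqr \<open>r = 0\<close> ec int_pow_pow[OF ec, of "int m" q] by simp
        finally show "y = e [^] k" .
      qed
    qed
    then obtain e where eD: "e \<in> D" and e: "\<And>k y. (a [^] (k::int), y) \<in> M \<Longrightarrow> y = e [^] k" by blast
    have ec: "e \<in> carrier G" using eD Dc by auto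
    define M' where "M' = {(a [^] (k::int) \<otimes> x, e [^] k \<otimes> y) | k x y. (x,y) \<in> M}"
    have aD: "\<And>k::int. e [^] k \<in> D" using eD DS subgroup_int_pow_closed by blast
    have aC: "\<And>k::int. a [^] k \<in> carrier G" using a by simp
    have Mc: "\<And>x y. (x,y) \<in> M \<Longrightarrow> x \<in> carrier G \<and> y \<in> carrier G" using Msub Dc by blast
    have "M' \<in> GR"
      unfolding GR_def
      apply (rule CollectI)
    proof (intro conjI allI impI ballI)
      show "M' \<subseteq> carrier G \<times> D"
      proof
        fix z assume "z \<in> M'"
        then obtain k x y where z: "z = (a [^] (k::int) \<otimes> x, e [^] k \<otimes> y)" "(x,y) \<in> M" unfolding M'_def by blast
        have "y \<in> D" using z(2) Msub by blast
        then have "e [^] k \<otimes> y \<in> D" using subgroup.m_closed[OF DS aD] by blast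
        moreover have "a [^] k \<otimes> x \<in> carrier G" using Mc[OF z(2)] aC by blast
        ultimately show "z \<in> carrier G \<times> D" using z(1) by blast
      qed
    next
      fix d assume d: "d \<in> D"
      then have "(a [^] (0::int) \<otimes> d, e [^] (0::int) \<otimes> d) \<in> M'" unfolding M'_def using Md by blast
      moreover have "(a [^] (0::int) \<otimes> d, e [^] (0::int) \<otimes> d) = (d,d)" using d Dc by auto
      ultimately show "(d,d) \<in> M'" by simp
    next
      fix x1 y1 x2 y2 assume z1: "(x1,y1) \<in> M'" and z2: "(x2,y2) \<in> M'"
      obtain k x y where 1: "x1 = a [^] (k::int) \<otimes> x" "y1 = e [^] k \<otimes> y" "(x,y) \<in> M" using z1 unfolding M'_def by blast
      obtain k' x' y' where 2: "x2 = a [^] (k'::int) \<otimes> x'" "y2 = e [^] k' \<otimes> y'" "(x',y') \<in> M" using z2 unfolding M'_def by blast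
      have "x1 \<otimes> x2 = a [^] (k + k') \<otimes> (x \<otimes> x')" "y1 \<otimes> y2 = e [^] (k + k') \<otimes> (y \<otimes> y')"
        using 1 2 Mc[OF 1(3)] Mc[OF 2(3)] a ec by (simp_all add: int_pow_mult m_ac)
      then show "(x1 \<otimes> x2, y1 \<otimes> y2) \<in> M'" unfolding M'_def using Mm[OF 1(3) 2(3)] by blast
    next
      fix x1 y1 assume z1: "(x1,y1) \<in> M'"
      obtain k x y where 1: "x1 = a [^] (k::int) \<otimes> x" "y1 = e [^] k \<otimes> y" "(x,y) \<in> M" using z1 unfolding M'_def by blast
      have "inv x1 = a [^] (-k) \<otimes> inv x" "inv y1 = e [^] (-k) \<otimes> inv y"
        using 1 Mc[OF 1(3)] a ec by (simp_all add: int_pow_neg inv_mult)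
      then show "(inv x1, inv y1) \<in> M'" unfolding M'_def using Mi[OF 1(3)] by blast
    next
      fix x1 y1 y2 assume z1: "(x1,y1) \<in> M'" and z2: "(x1,y2) \<in> M'"
      obtain k x y where 1: "x1 = a [^] (k::int) \<otimes> x" "y1 = e [^] k \<otimes> y" "(x,y) \<in> M" using z1 unfolding M'_def by blast
      obtain k' x' y' where 2: "x1 = a [^] (k'::int) \<otimes> x'" "y2 = e [^] k' \<otimes> y'" "(x',y') \<in> M" using z2 unfolding M'_def by blast
      have xc: "x \<in> carrier G" "y \<in> carrier G" using Mc[OF 1(3)] by auto
      have xc': "x' \<in> carrier G" "y' \<in> carrier G" using Mc[OF 2(3)] by auto
      have "a [^] (k - k') = x' \<otimes> inv x"
      proof -
        have "a [^] (k - k') = a [^] k \<otimes> inv (a [^] k')" using a by (simp add: int_pow_diff)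
        also have "... = x' \<otimes> inv x"
          using cg_aux1[OF aC aC xc(1) xc'(1)] 1(1) 2(1) by simp
        finally show ?thesis .
      qed
      moreover have "(x' \<otimes> inv x, y' \<otimes> inv y) \<in> M" using Mm[OF 2(3) Mi[OF 1(3)]] .
      ultimately have "(a [^] (k - k'), y' \<otimes> inv y) \<in> M" by simp
      then have "y' \<otimes> inv y = e [^] (k - k')" by (rule e)
      then have "y' \<otimes> inv y = e [^] k \<otimes> inv (e [^] k')" using ec by (simp add: int_pow_diff)
      then have "e [^] k \<otimes> inv (e [^] k') = y' \<otimes> inv y" by simp
      then have "e [^] k \<otimes> y = e [^] k' \<otimes> y'" using cg_aux2[OF int_pow_closed int_pow_closed xc(2) xc'(2)] ec by blast
      then show "y1 = y2" using 1(2) 2(2) by simp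
    qed
    moreover have "M \<subseteq> M'"
    proof
      fix z assume "z \<in> M"
      then obtain x y where "z = (x,y)" "(x,y) \<in> M" by (cases z) auto
      moreover have "(x,y) = (a [^] (0::int) \<otimes> x, e [^] (0::int) \<otimes> y)" using Mc[OF \<open>(x,y) \<in> M\<close>] by simp
      ultimately show "z \<in> M'" unfolding M'_def by blast
    qed
    ultimately have "M' = M" using max by blast
    moreover have "(a, e) = (a [^] (1::int) \<otimes> \<one>, e [^] (1::int) \<otimes> \<one>)" using a ec by simp
    then have "(a, e) \<in> M'" unfolding M'_def using M11 by blast
    ultimately show False using na by (metis fst_conv image_eqI)
  qed
  define \<pi> where "\<pi> x = (THE y. (x,y) \<in> M)" for x
  have pi: "(x, \<pi> x) \<in> M" if xc: "x \<in> carrier G" for x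
  proof -
    obtain y where "(x,y) \<in> M" using total[OF xc] by auto
    then show ?thesis unfolding \<pi>_def using Mf by (metis theI)
  qed
  have piv: "\<pi> x = y" if "(x,y) \<in> M" for x y
  proof -
    have "x \<in> carrier G" using that Msub by blast
    then show ?thesis using pi Mf that by blast
  qed
  show ?thesis
  proof (intro exI conjI ballI)
    fix x assume "x \<in> carrier G" then show "\<pi> x \<in> D" using pi Msub by (meson SigmaD2 subsetD)
  next
    fix x y assume "x \<in> carrier G" "y \<in> carrier G"
    then show "\<pi> (x \<otimes> y) = \<pi> x \<otimes> \<pi> y" using pi Mm piv by metis
  next
    fix d assume "d \<in> D" then show "\<pi> d = d" using Md piv by blast
  qed
qed



lemma nt_aux:
  fixes q k m l :: nat
  assumes q: "Factorial_Ring.prime q" and m: "m \<ge> 1" and d: "q ^ l dvd k * m" and ml: "m \<le> l"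
  shows "q ^ (l - m) dvd k"
proof (cases "k = 0")
  case True then show ?thesis by simp
next
  case False
  have q2: "q \<ge> 2" using q prime_ge_2_nat by blast
  have m0: "m \<noteq> 0" using m by simp
  have nu: "\<not> is_unit q" using q2 by simp
  have "m < 2 ^ m" by simp
  also have "2 ^ m \<le> q ^ m" using q2 by (simp add: power_mono)
  finally have "\<not> q ^ m dvd m" using m0 by (meson dvd_imp_le not_le gr0I)
  then have v: "multiplicity q m < m" using multiplicity_lessI m0 nu by blast
  have "l \<le> multiplicity q (k * m)" using d multiplicity_geI False m0 nu by (metis mult_eq_0_iff)
  also have "... = multiplicity q k + multiplicity q m"
    using prime_elem_multiplicity_mult_distrib q False m0 by (metis prime_imp_prime_elem)
  finally have "l - m \<le> multiplicity q k" using v by linarith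
  then show ?thesis using multiplicity_dvd' False nu by blast
qed

lemma (in group) quasicyclic_torsion_finite:
  assumes Q: "quasicyclic_subgroup Q G" and m: "m \<ge> 1"
  shows "finite {y \<in> Q. y [^] (m::nat) = \<one>}"
proof -
  obtain q x where q: "Factorial_Ring.prime (q::nat)" and xc: "range x \<subseteq> carrier G"
    and x0: "x 0 = \<one>" and x1: "x 1 \<noteq> \<one>" and xs: "\<And>n. x (Suc n) [^] q = x n"
    and QG: "Q = generate G (range x)"
    using Q unfolding quasicyclic_subgroup_def by blast
  have xC: "\<And>j. x j \<in> carrier G" using xc by blast
  have q2: "q \<ge> 2" using q prime_ge_2_nat by blast
  have lift0: "x (i + d) [^] (q ^ d) = x i" for i d
  proof (induction d)
    case 0 then show ?case using xC by simp
  next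
    case (Suc d)
    have "x (i + Suc d) [^] (q ^ Suc d) = (x (Suc (i + d)) [^] q) [^] (q ^ d)"
      using xC by (simp add: nat_pow_pow)
    also have "... = x i" using xs Suc.IH by simp
    finally show ?case .
  qed
  have lift: "x i [^] (a::nat) = x l [^] (q ^ (l - i) * a)" if il: "i \<le> l" for i l a
  proof -
    have "x l = x (i + (l - i))" using il by simp
    then have "x i = x l [^] (q ^ (l - i))" using lift0[of i "l - i"] by simp
    then show ?thesis using xC by (simp add: nat_pow_pow)
  qed
  have top: "x j [^] (q ^ j) = \<one>" for j using lift0[of 0 j] x0 by simp
  have U: "\<exists>j k. y = x j [^] (k::nat)" if yQ: "y \<in> Q" for y
    using yQ unfolding QG
  proof (induction rule: generate.induct)
    case one
    have "\<one> = x 0 [^] (0::nat)" by simp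
    then show ?case by blast
  next
    case (incl h) then obtain j where h: "h = x j" by blast
    have "x j = x j [^] (Suc 0)" using xC by simp
    then show ?case using h by blast
  next
    case (inv h) then obtain j where h: "h = x j" by blast
    have qj: "Suc (q ^ j - 1) = q ^ j" using q2 by simp
    have "x j [^] (q ^ j - 1) \<otimes> x j = x j [^] (Suc (q ^ j - 1))" by simp
    also have "... = \<one>" using top qj by simp
    finally have "inv (x j) = x j [^] (q ^ j - 1)" using inv_equality xC by blast
    then show ?case using h by blast
  next
    case (eng h1 h2)
    then obtain i a j b where h: "h1 = x i [^] (a::nat)" "h2 = x j [^] (b::nat)" by blast
    define l where "l = max i j"
    have "h1 \<otimes> h2 = x l [^] (q ^ (l - i) * a) \<otimes> x l [^] (q ^ (l - j) * b)"
      using h lift[of i l] lift[of j l] by (simp add: l_def)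
    also have "... = x l [^] (q ^ (l - i) * a + q ^ (l - j) * b)" using xC by (simp add: nat_pow_mult)
    finally show ?case by blast
  qed
  have ordx: "q ^ l dvd t" if l1: "l \<ge> 1" and t: "x l [^] (t::nat) = \<one>" for l t
  proof -
    have "ord (x l) dvd q ^ l" using pow_eq_id[OF xC] top by blast
    then obtain s where s: "s \<le> l" "ord (x l) = q ^ s" using divides_primepow_nat[OF q] by blast
    have "s = l"
    proof (rule ccontr)
      assume "s \<noteq> l" then have "s \<le> l - 1" using s by simp
      then have "q ^ s dvd q ^ (l - 1)" by (simp add: le_imp_power_dvd)
      then have "x l [^] (q ^ (l - 1)) = \<one>" using pow_eq_id[OF xC] s by simp
      moreover have "x l [^] (q ^ (l - 1)) = x 1" using lift0[of 1 "l - 1"] l1 by simp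
      ultimately show False using x1 by simp
    qed
    then show ?thesis using pow_eq_id[OF xC] t s by simp
  qed
  have "{y \<in> Q. y [^] m = \<one>} \<subseteq> (\<lambda>t. x m [^] t) ` {..<q ^ m}"
  proof
    fix y assume y: "y \<in> {y \<in> Q. y [^] m = \<one>}"
    obtain j k where yk: "y = x j [^] (k::nat)" using U y by blast
    define l where "l = max j m"
    have l: "j \<le> l" "m \<le> l" "l \<ge> 1" using m by (auto simp: l_def)
    define k' where "k' = q ^ (l - j) * k"
    have y': "y = x l [^] k'" using yk lift[OF l(1)] by (simp add: k'_def)
    have "x l [^] (k' * m) = \<one>" using y y' xC by (simp add: nat_pow_pow)
    then have "q ^ l dvd k' * m" using ordx l by blast
    then have "q ^ (l - m) dvd k'" using nt_aux q m l by blast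
    then obtain t where t: "k' = q ^ (l - m) * t" by blast
    have "y = x m [^] t" using y' t lift[OF l(2), of t] by simp
    also have "... = x m [^] (t mod q ^ m)"
    proof -
      have "x m [^] t = x m [^] (q ^ m * (t div q ^ m) + t mod q ^ m)" by simp
      also have "... = x m [^] (q ^ m * (t div q ^ m)) \<otimes> x m [^] (t mod q ^ m)"
        using xC by (simp add: nat_pow_mult)
      also have "... = (x m [^] (q ^ m)) [^] (t div q ^ m) \<otimes> x m [^] (t mod q ^ m)"
        using xC by (simp add: nat_pow_pow)
      also have "... = x m [^] (t mod q ^ m)" using top xC by simp
      finally show ?thesis .
    qed
    finally show "y \<in> (\<lambda>t. x m [^] t) ` {..<q ^ m}" using q2 by auto
  qed
  then show ?thesis by (rule finite_subset) simp
qed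

lemma (in group) subgroup_nat_pow_closed':
  "subgroup H G \<Longrightarrow> h \<in> H \<Longrightarrow> h [^] (n::nat) \<in> H"
  using subgroup_int_pow_closed[of H h "int n"] by (simp add: int_pow_int)

lemma (in group) foldr_closed: "subgroup H G \<Longrightarrow> set xs \<subseteq> H \<Longrightarrow> foldr (\<otimes>) xs \<one> \<in> H"
  by (induction xs) (auto simp: subgroup.one_closed subgroup.m_closed)

lemma (in group) foldr_ones: "set ys \<subseteq> {\<one>} \<Longrightarrow> foldr (\<otimes>) ys \<one> = \<one>"
  by (induction ys) auto

lemma (in group) foldr_single:
  "set ys \<subseteq> carrier G \<Longrightarrow> i < length ys \<Longrightarrow> (\<forall>j<length ys. j \<noteq> i \<longrightarrow> ys!j = \<one>) \<Longrightarrow> foldr (\<otimes>) ys \<one> = ys!i"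
proof (induction ys arbitrary: i)
  case Nil then show ?case by simp
next
  case (Cons a ys)
  show ?case
  proof (cases i)
    case 0
    have "\<forall>j<length ys. ys ! j = \<one>"
    proof (intro allI impI)
      fix j assume "j < length ys"
      then show "ys ! j = \<one>" using Cons.prems(3) 0 by (metis Suc_less_eq length_Cons nat.simps(3) nth_Cons_Suc)
    qed
    then have "set ys \<subseteq> {\<one>}" by (auto simp: in_set_conv_nth)
    then show ?thesis using 0 Cons.prems by (simp add: foldr_ones)
  next
    case (Suc i')
    have a1: "a = \<one>" using Cons.prems(3) Suc by force
    have "\<forall>j<length ys. j \<noteq> i' \<longrightarrow> ys!j = \<one>"
    proof (intro allI impI)
      fix j assume "j < length ys" "j \<noteq> i'"
      then show "ys ! j = \<one>" using Cons.prems(3) Suc by (metis Suc_less_eq length_Cons nat.inject nth_Cons_Suc)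
    qed
    then have "foldr (\<otimes>) ys \<one> = ys ! i'" using Cons.IH[of i'] Cons.prems Suc by simp
    moreover have "foldr (\<otimes>) ys \<one> \<in> carrier G" using foldr_closed[of "carrier G" ys] Cons.prems
      by (simp add: subgroup_self)
    ultimately show ?thesis using a1 Suc by simp
  qed
qed

lemma (in group) foldr_pow:
  assumes HS: "subgroup H G" and comm: "\<And>x y. x \<in> H \<Longrightarrow> y \<in> H \<Longrightarrow> x \<otimes> y = y \<otimes> x"
  shows "set xs \<subseteq> H \<Longrightarrow> (foldr (\<otimes>) xs \<one>) [^] (n::nat) = foldr (\<otimes>) (map (\<lambda>z. z [^] n) xs) \<one>"
proof (induction xs)
  case Nil then show ?case by simp
next
  case (Cons a xs)
  have aH: "a \<in> H" and fH: "foldr (\<otimes>) xs \<one> \<in> H" using Cons.prems foldr_closed[OF HS] by auto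
  have Hc: "H \<subseteq> carrier G" using HS subgroup.subset by blast
  have "(a \<otimes> foldr (\<otimes>) xs \<one>) [^] n = a [^] n \<otimes> (foldr (\<otimes>) xs \<one>) [^] n"
    using pow_mult_distrib[OF comm[OF aH fH]] aH fH Hc by blast
  then show ?case using Cons by simp
qed

lemma (in group) chernikov_torsion_finite:
  assumes Ch: "chernikov_subgroup D G" and comm: "\<And>x y. x \<in> D \<Longrightarrow> y \<in> D \<Longrightarrow> x \<otimes> y = y \<otimes> x"
    and n: "n \<ge> 1"
  shows "finite {d \<in> D. d [^] (n::nat) = \<one>}"
proof -
  have DS: "subgroup D G" using Ch unfolding chernikov_subgroup_def by blast
  obtain N Qs where NS: "N \<lhd> G\<lparr>carrier := D\<rparr>" and fin: "finite (rcosets\<^bsub>G\<lparr>carrier := D\<rparr>\<^esub> N)"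
    and Qq: "\<forall>Q\<in>set Qs. quasicyclic_subgroup Q G" and idp: "internal_direct_product N Qs G"
    using Ch unfolding chernikov_subgroup_def by blast
  have Dc: "D \<subseteq> carrier G" using DS subgroup.subset by blast
  have NSD: "subgroup N (G\<lparr>carrier := D\<rparr>)" using NS normal_imp_subgroup by blast
  have ND: "N \<subseteq> D" using subgroup.subset[OF NSD] by simp
  have NG: "subgroup N G" using incl_subgroup[OF DS NSD] .
  define L where "L = {xs. length xs = length Qs \<and> (\<forall>i<length xs. xs ! i \<in> Qs ! i)}"
  have QsS: "subgroup (Qs ! i) G" if "i < length Qs" for i
    using idp that nth_mem unfolding internal_direct_product_def by blast
  have bij: "bij_betw (\<lambda>xs. foldr (\<otimes>) xs \<one>) L N"
    unfolding L_def using idp[unfolded internal_direct_product_def] by (rule conjunct2[OF conjunct2])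
  have img: "(\<lambda>xs. foldr (\<otimes>) xs \<one>) ` L = N" using bij_betw_imp_surj_on[OF bij] .
  have inj: "inj_on (\<lambda>xs. foldr (\<otimes>) xs \<one>) L" using bij_betw_imp_inj_on[OF bij] .
  have QN: "Qs ! i \<subseteq> N" if i: "i < length Qs" for i
  proof
    fix y assume y: "y \<in> Qs ! i"
    define ys where "ys = (replicate (length Qs) \<one>)[i := y]"
    have "ys \<in> L" unfolding L_def ys_def
    proof (intro CollectI conjI allI impI)
      show "length ((replicate (length Qs) \<one>)[i := y]) = length Qs" by simp
      fix j assume j: "j < length ((replicate (length Qs) \<one>)[i := y])"
      then have jl: "j < length Qs" by simp
      show "(replicate (length Qs) \<one>)[i := y] ! j \<in> Qs ! j"
        using y subgroup.one_closed[OF QsS[OF jl]] i jl by (cases "j = i") (auto simp: nth_list_update)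
    qed
    then have "foldr (\<otimes>) ys \<one> \<in> N" using img by blast
    moreover have "foldr (\<otimes>) ys \<one> = y"
    proof -
      have yc: "y \<in> carrier G" using y QsS[OF i] subgroup.subset by blast
      have "set ys \<subseteq> insert y (set (replicate (length Qs) \<one>))"
        unfolding ys_def by (rule set_update_subset_insert)
      also have "... \<subseteq> carrier G" using yc by auto
      finally have "set ys \<subseteq> carrier G" .
      moreover have "\<forall>j<length ys. j \<noteq> i \<longrightarrow> ys!j = \<one>" by (simp add: ys_def nth_list_update)
      ultimately have "foldr (\<otimes>) ys \<one> = ys ! i" using foldr_single i by (simp add: ys_def)
      then show ?thesis using i by (simp add: ys_def)
    qed
    ultimately show "y \<in> N" by simp
  qed
  define T where "T = {x \<in> N. x [^] n = \<one>}"
  define B where "B = (\<Union>i<length Qs. {y \<in> Qs ! i. y [^] n = \<one>})"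
  have Bfin: "finite B" unfolding B_def using quasicyclic_torsion_finite Qq n nth_mem by auto
  have rep: "replicate (length Qs) \<one> \<in> L" unfolding L_def using QsS subgroup.one_closed by auto
  have rep1: "foldr (\<otimes>) (replicate (length Qs) \<one>) \<one> = \<one>" by (rule foldr_ones) auto
  have "T \<subseteq> (\<lambda>xs. foldr (\<otimes>) xs \<one>) ` {xs. set xs \<subseteq> B \<and> length xs = length Qs}"
  proof
    fix z assume z: "z \<in> T"
    then have "z \<in> N" unfolding T_def by blast
    then obtain xs where xs: "xs \<in> L" "z = foldr (\<otimes>) xs \<one>" using img by blast
    have xsQ: "\<And>i. i < length xs \<Longrightarrow> xs ! i \<in> Qs ! i" and lxs: "length xs = length Qs"
      using xs(1) unfolding L_def by auto
    have xsD: "set xs \<subseteq> D"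
    proof
      fix w assume "w \<in> set xs"
      then obtain i where "i < length xs" "w = xs ! i" by (auto simp: in_set_conv_nth)
      then show "w \<in> D" using xsQ QN ND lxs by auto
    qed
    have f1: "foldr (\<otimes>) (map (\<lambda>z. z [^] n) xs) \<one> = \<one>"
      using foldr_pow[OF DS comm xsD, of n] z xs(2) by (simp add: T_def)
    have mL: "map (\<lambda>z. z [^] n) xs \<in> L"
      unfolding L_def using xsQ lxs QsS subgroup_nat_pow_closed' by auto
    have eqr: "map (\<lambda>z. z [^] n) xs = replicate (length Qs) \<one>"
      by (rule inj_onD[OF inj _ mL rep]) (simp only: f1 rep1)
    have pw: "xs ! i [^] n = \<one>" if il: "i < length xs" for i
    proof -
      have "map (\<lambda>z. z [^] n) xs ! i = replicate (length Qs) \<one> ! i" using eqr by (rule arg_cong)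
      then show ?thesis using il lxs by simp
    qed
    have "set xs \<subseteq> B"
    proof
      fix w assume "w \<in> set xs"
      then obtain i where "i < length xs" "w = xs ! i" by (auto simp: in_set_conv_nth)
      then show "w \<in> B" unfolding B_def using xsQ pw lxs by auto
    qed
    then show "z \<in> (\<lambda>xs. foldr (\<otimes>) xs \<one>) ` {xs. set xs \<subseteq> B \<and> length xs = length Qs}"
      using xs(2) lxs by blast
  qed
  then have Tfin: "finite T" using finite_lists_length_eq[OF Bfin] finite_subset by blast
  define Tor where "Tor = {d \<in> D. d [^] n = \<one>}"
  define R where "R = rcosets\<^bsub>G\<lparr>carrier := D\<rparr>\<^esub> N"
  have cov: "Tor \<subseteq> (\<Union>Zc\<in>R. Zc \<inter> Tor)"
  proof
    fix d assume d: "d \<in> Tor"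
    then have dD: "d \<in> D" unfolding Tor_def by blast
    have "N #> d \<in> R" unfolding R_def RCOSETS_def using dD by auto
    moreover have "d \<in> N #> d" unfolding r_coset_def using subgroup.one_closed[OF NG] dD Dc
      by (metis UN_iff l_one singletonI subsetD)
    ultimately show "d \<in> (\<Union>Zc\<in>R. Zc \<inter> Tor)" using d by blast
  qed
  have "finite (Zc \<inter> Tor)" if Zc: "Zc \<in> R" for Zc
  proof (cases "Zc \<inter> Tor = {}")
    case True then show ?thesis by simp
  next
    case False
    then obtain y0 where y0: "y0 \<in> Zc" "y0 \<in> Tor" by blast
    obtain a where aD: "a \<in> D" and Xa: "Zc = N #> a" using Zc unfolding R_def RCOSETS_def by auto
    obtain h0 where h0: "h0 \<in> N" "y0 = h0 \<otimes> a" using y0(1) Xa unfolding r_coset_def by blast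
    have y0D: "y0 \<in> D" using y0 unfolding Tor_def by blast
    have "Zc \<inter> Tor \<subseteq> (\<lambda>z. z \<otimes> y0) ` T"
    proof
      fix y assume y: "y \<in> Zc \<inter> Tor"
      obtain h where h: "h \<in> N" "y = h \<otimes> a" using y Xa unfolding r_coset_def by blast
      have yD: "y \<in> D" using y unfolding Tor_def by blast
      have ac: "a \<in> carrier G" "h \<in> carrier G" "h0 \<in> carrier G" using aD h h0 ND Dc by auto
      have "y \<otimes> inv y0 = h \<otimes> inv h0"
        using h h0 ac by (simp add: inv_mult_group m_assoc mi1)
      then have zN: "y \<otimes> inv y0 \<in> N" using subgroup.m_closed[OF NG h(1) subgroup.m_inv_closed[OF NG h0(1)]] by simp
      have iy0D: "inv y0 \<in> D" using subgroup.m_inv_closed[OF DS y0D] .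
      have "(y \<otimes> inv y0) [^] n = y [^] n \<otimes> (inv y0) [^] n"
        using pow_mult_distrib[OF comm[OF yD iy0D]] yD iy0D Dc by blast
      also have "... = \<one>"
      proof -
        have y0c: "y0 \<in> carrier G" using y0D Dc by blast
        have "y [^] n = \<one>" "y0 [^] n = \<one>" using y y0 unfolding Tor_def by auto
        then show ?thesis using nat_pow_inv[OF y0c, of n] by simp
      qed
      finally have "y \<otimes> inv y0 \<in> T" using zN unfolding T_def by blast
      moreover have "y = (y \<otimes> inv y0) \<otimes> y0"
      proof -
        have "y \<in> carrier G" "y0 \<in> carrier G" using yD y0D Dc by blast+
        then show ?thesis by (simp add: m_assoc)
      qed
      ultimately show "y \<in> (\<lambda>z. z \<otimes> y0) ` T" by blast
    qed
    then show ?thesis using Tfin finite_subset by blast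
  qed
  moreover have "finite R" using fin unfolding R_def .
  ultimately have "finite (\<Union>Zc\<in>R. Zc \<inter> Tor)" by blast
  then show ?thesis using cov finite_subset unfolding Tor_def by blast
qed


lemma (in group) main_aux:
  assumes "A \<lhd> G" and "commutative_subgroup A G"
    and "finite (rcosets (centralizer G A))"
    and "D \<subseteq> A" and "D \<lhd> G"
    and "divisible_subgroup D G" and "chernikov_subgroup D G"
  shows "\<exists>S. S \<subseteq> A \<and> S \<lhd> G \<and> A = S <#> D \<and> finite (S \<inter> D)"
proof -
  have AN: "A \<lhd> G" using assms(1) .
  have AS: "subgroup A G" using AN normal_imp_subgroup by blast
  have Acomm: "\<And>x y. x \<in> A \<Longrightarrow> y \<in> A \<Longrightarrow> x \<otimes> y = y \<otimes> x"
    using assms(2) unfolding commutative_subgroup_def by blast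
  have Ac: "A \<subseteq> carrier G" using AS subgroup.subset by blast
  have DA: "D \<subseteq> A" using assms(4) .
  have DN: "D \<lhd> G" using assms(5) .
  have DS: "subgroup D G" using DN normal_imp_subgroup by blast
  have Dc: "D \<subseteq> carrier G" using DA Ac by blast
  have Ddiv: "\<And>d n. d \<in> D \<Longrightarrow> (n::nat) \<ge> 1 \<Longrightarrow> \<exists>e\<in>D. e [^] n = d"
    using assms(6) unfolding divisible_subgroup_def by blast
  have Aconj: "\<And>x a. x \<in> carrier G \<Longrightarrow> a \<in> A \<Longrightarrow> x \<otimes> a \<otimes> inv x \<in> A"
    using AN normal_inv_iff by blast
  have Dconj: "\<And>x a. x \<in> carrier G \<Longrightarrow> a \<in> D \<Longrightarrow> x \<otimes> a \<otimes> inv x \<in> D"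
    using DN normal_inv_iff by blast
  have Aconj': "\<And>x a. x \<in> carrier G \<Longrightarrow> a \<in> A \<Longrightarrow> inv x \<otimes> a \<otimes> x \<in> A"
  proof -
    fix x a assume "x \<in> carrier G" "a \<in> A"
    then show "inv x \<otimes> a \<otimes> x \<in> A" using Aconj[of "inv x" a] by simp
  qed
  have Dconj': "\<And>x a. x \<in> carrier G \<Longrightarrow> a \<in> D \<Longrightarrow> inv x \<otimes> a \<otimes> x \<in> D"
  proof -
    fix x a assume "x \<in> carrier G" "a \<in> D"
    then show "inv x \<otimes> a \<otimes> x \<in> D" using Dconj[of "inv x" a] by simp
  qed
  define AA where "AA = G\<lparr>carrier := A\<rparr>"
  have AAg: "comm_group AA" unfolding AA_def
    using group.group_comm_groupI[OF subgroup.subgroup_is_group[OF AS is_group]] Acomm by simp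
  have DAA: "subgroup D AA" unfolding AA_def using subgroup_incl[OF DS AS DA] .
  have divAA: "\<And>d n. d \<in> D \<Longrightarrow> (n::nat) \<ge> 1 \<Longrightarrow> \<exists>e\<in>D. e [^]\<^bsub>AA\<^esub> n = d"
    unfolding AA_def using Ddiv by (simp add: nat_pow_consistent[symmetric])
  have "\<exists>\<pi>. (\<forall>x\<in>A. \<pi> x \<in> D) \<and> (\<forall>x\<in>A. \<forall>y\<in>A. \<pi> (x \<otimes> y) = \<pi> x \<otimes> \<pi> y) \<and> (\<forall>d\<in>D. \<pi> d = d)"
    using comm_group.divisible_retract[OF AAg DAA divAA] unfolding AA_def by simp
  then obtain \<pi> where piD: "\<And>x. x \<in> A \<Longrightarrow> \<pi> x \<in> D"
    and pim: "\<And>x y. x \<in> A \<Longrightarrow> y \<in> A \<Longrightarrow> \<pi> (x \<otimes> y) = \<pi> x \<otimes> \<pi> y"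
    and pid: "\<And>d. d \<in> D \<Longrightarrow> \<pi> d = d" by blast
  have piC: "\<And>x. x \<in> A \<Longrightarrow> \<pi> x \<in> carrier G" using piD Dc by blast
  have piA: "\<And>x. x \<in> A \<Longrightarrow> \<pi> x \<in> A" using piD DA by blast
  define phi where "phi t a = t \<otimes> \<pi> (inv t \<otimes> a \<otimes> t) \<otimes> inv t" for t a
  define Rphi where "Rphi t = restrict (phi t) A" for t
  define Phi where "Phi = Rphi ` carrier G"
  have phiD: "\<And>t a. t \<in> carrier G \<Longrightarrow> a \<in> A \<Longrightarrow> phi t a \<in> D"
    unfolding phi_def using Dconj piD Aconj' by blast
  have conj_mult: "\<And>t u v. t \<in> carrier G \<Longrightarrow> u \<in> carrier G \<Longrightarrow> v \<in> carrier G \<Longrightarrow>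
      t \<otimes> (u \<otimes> v) \<otimes> inv t = (t \<otimes> u \<otimes> inv t) \<otimes> (t \<otimes> v \<otimes> inv t)"
    by (simp add: m_assoc mi2)
  have phim: "phi t (a \<otimes> b) = phi t a \<otimes> phi t b" if t: "t \<in> carrier G" and a: "a \<in> A" and b: "b \<in> A" for t a b
  proof -
    have ac: "a \<in> carrier G" "b \<in> carrier G" using a b Ac by auto
    have "inv t \<otimes> (a \<otimes> b) \<otimes> t = (inv t \<otimes> a \<otimes> t) \<otimes> (inv t \<otimes> b \<otimes> t)"
      using conj_mult[of "inv t" a b] t ac by simp
    then have "\<pi> (inv t \<otimes> (a \<otimes> b) \<otimes> t) = \<pi> (inv t \<otimes> a \<otimes> t) \<otimes> \<pi> (inv t \<otimes> b \<otimes> t)"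
      using pim Aconj' t a b by simp
    then show ?thesis
      unfolding phi_def using conj_mult t piC Aconj' a b by simp
  qed
  have phid: "phi t d = d" if t: "t \<in> carrier G" and d: "d \<in> D" for t d
  proof -
    have "\<pi> (inv t \<otimes> d \<otimes> t) = inv t \<otimes> d \<otimes> t" using pid Dconj' t d by blast
    moreover have "d \<in> carrier G" using d Dc by blast
    ultimately show ?thesis unfolding phi_def using t by (simp add: m_assoc mi1)
  qed
  have phi_shift: "phi (g \<otimes> t) a = g \<otimes> phi t (inv g \<otimes> a \<otimes> g) \<otimes> inv g"
    if g: "g \<in> carrier G" and t: "t \<in> carrier G" and a: "a \<in> A" for g t a
  proof -
    have ac: "a \<in> carrier G" using a Ac by blast
    define w where "w = inv (g \<otimes> t) \<otimes> a \<otimes> (g \<otimes> t)"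
    have wA: "w \<in> A" unfolding w_def using Aconj' g t a by simp
    have w2: "inv t \<otimes> (inv g \<otimes> a \<otimes> g) \<otimes> t = w" unfolding w_def using g t ac
      by (simp add: m_assoc inv_mult_group)
    have "phi (g \<otimes> t) a = (g \<otimes> t) \<otimes> \<pi> w \<otimes> inv (g \<otimes> t)" unfolding phi_def w_def by simp
    also have "... = g \<otimes> (t \<otimes> \<pi> w \<otimes> inv t) \<otimes> inv g" using g t piC[OF wA]
      by (simp add: m_assoc inv_mult_group)
    also have "... = g \<otimes> phi t (inv g \<otimes> a \<otimes> g) \<otimes> inv g" unfolding phi_def using w2 by simp
    finally show ?thesis .
  qed
  define C where "C = centralizer G A"
  have Cc: "\<And>c. c \<in> C \<Longrightarrow> c \<in> carrier G" and Ccomm: "\<And>c a. c \<in> C \<Longrightarrow> a \<in> A \<Longrightarrow> c \<otimes> a = a \<otimes> c"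
    unfolding C_def centralizer_def by auto
  have C1: "\<one> \<in> C" unfolding C_def centralizer_def using Ac by auto
  have phiC: "phi (inv c) b = \<pi> b" if c: "c \<in> C" and b: "b \<in> A" for c b
  proof -
    have cc: "c \<in> carrier G" using Cc c by blast
    have bc: "b \<in> carrier G" using b Ac by blast
    have "c \<otimes> b \<otimes> inv c = b" using Ccomm[OF c b] cc bc by (simp add: m_assoc)
    moreover have "inv c \<otimes> \<pi> b \<otimes> c = \<pi> b"
      using Ccomm[OF c piA[OF b], symmetric] cc piC[OF b] by (simp add: m_assoc mi2)
    ultimately show ?thesis unfolding phi_def using cc by simp
  qed
  have RshiftC: "Rphi (t \<otimes> inv c) = Rphi t" if t: "t \<in> carrier G" and c: "c \<in> C" for t c
    unfolding Rphi_def
  proof (rule restrict_ext)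
    fix a assume a: "a \<in> A"
    have cc: "c \<in> carrier G" using Cc c by blast
    have "phi (t \<otimes> inv c) a = t \<otimes> phi (inv c) (inv t \<otimes> a \<otimes> t) \<otimes> inv t"
      using phi_shift t cc a by simp
    also have "... = phi t a" using phiC[OF c Aconj'[OF t a]] unfolding phi_def by simp
    finally show "phi (t \<otimes> inv c) a = phi t a" .
  qed
  define F where "F Y = Rphi (inv (SOME s. s \<in> Y))" for Y
  have "Phi \<subseteq> F ` (rcosets C)"
  proof
    fix f assume "f \<in> Phi"
    then obtain t where t: "t \<in> carrier G" "f = Rphi t" unfolding Phi_def by blast
    define Y where "Y = C #> inv t"
    have Y: "Y \<in> rcosets C" unfolding Y_def RCOSETS_def using t by auto
    have "inv t \<in> Y" unfolding Y_def r_coset_def using C1 t by force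
    then have "(SOME s. s \<in> Y) \<in> Y" by (rule someI)
    then obtain c where c: "c \<in> C" "(SOME s. s \<in> Y) = c \<otimes> inv t" unfolding Y_def r_coset_def by blast
    have cc: "c \<in> carrier G" using Cc c by blast
    have "inv (c \<otimes> inv t) = t \<otimes> inv c" using cc t by (simp add: inv_mult_group)
    then have "F Y = Rphi (t \<otimes> inv c)" unfolding F_def using c by simp
    also have "... = Rphi t" using RshiftC t c by blast
    finally have "f = F Y" using t by simp
    then show "f \<in> F ` (rcosets C)" using Y by (rule image_eqI)
  qed
  moreover have "finite (rcosets C)" using assms(3) unfolding C_def .
  ultimately have finPhi: "finite Phi" using finite_surj by blast
  have Phine: "Rphi \<one> \<in> Phi" unfolding Phi_def by (rule imageI[OF one_closed])
  define n where "n = card Phi"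
  have "Phi \<noteq> {}" using Phine by blast
  then have n1: "n \<ge> 1" unfolding n_def using finPhi by (simp add: Suc_le_eq card_gt_0_iff)
  \<comment> \<open>the averaged map\<close>
  define DD where "DD = G\<lparr>carrier := D\<rparr>"
  have DDg: "comm_group DD" unfolding DD_def
    using group.group_comm_groupI[OF subgroup.subgroup_is_group[OF DS is_group]] Acomm DA by auto
  interpret DDg: comm_group DD by (rule DDg)
  have DDc[simp]: "carrier DD = D" and DDm[simp]: "\<And>x y. x \<otimes>\<^bsub>DD\<^esub> y = x \<otimes> y"
    and DD1[simp]: "\<one>\<^bsub>DD\<^esub> = \<one>" unfolding DD_def by simp_all
  define \<sigma> where "\<sigma> a = finprod DD (\<lambda>f. f a) Phi" for a
  have PhiD: "\<And>f a. f \<in> Phi \<Longrightarrow> a \<in> A \<Longrightarrow> f a \<in> D"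
    using phiD unfolding Phi_def Rphi_def by auto
  have PhiF: "(\<lambda>f. f a) \<in> Phi \<rightarrow> carrier DD" if a: "a \<in> A" for a
    using PhiD a by auto
  have sigD: "\<sigma> a \<in> D" if a: "a \<in> A" for a
  proof -
    have "\<sigma> a \<in> carrier DD" unfolding \<sigma>_def by (rule DDg.finprod_closed[OF PhiF[OF a]])
    then show ?thesis by simp
  qed
  have sigm: "\<sigma> (a \<otimes> b) = \<sigma> a \<otimes> \<sigma> b" if a: "a \<in> A" and b: "b \<in> A" for a b
  proof -
    have abA: "a \<otimes> b \<in> A" using subgroup.m_closed[OF AS a b] .
    have "\<sigma> (a \<otimes> b) = finprod DD (\<lambda>f. f a \<otimes>\<^bsub>DD\<^esub> f b) Phi"
      unfolding \<sigma>_def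
    proof (rule DDg.finprod_cong')
      show "(\<lambda>f. f a \<otimes>\<^bsub>DD\<^esub> f b) \<in> Phi \<rightarrow> carrier DD"
      proof
        fix f assume "f \<in> Phi"
        then show "f a \<otimes>\<^bsub>DD\<^esub> f b \<in> carrier DD" using subgroup.m_closed[OF DS PhiD[OF _ a] PhiD[OF _ b]] by simp
      qed
      fix f assume "f \<in> Phi"
      then obtain t where t: "t \<in> carrier G" "f = Rphi t" unfolding Phi_def by blast
      show "f (a \<otimes> b) = f a \<otimes>\<^bsub>DD\<^esub> f b" using t phim[OF t(1) a b] a b abA unfolding Rphi_def by simp
    qed simp
    also have "... = \<sigma> a \<otimes>\<^bsub>DD\<^esub> \<sigma> b" unfolding \<sigma>_def
      by (rule DDg.finprod_multf[OF PhiF[OF a] PhiF[OF b]])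
    finally show ?thesis by simp
  qed
  have sigd: "\<sigma> d = d [^] n" if d: "d \<in> D" for d
  proof -
    have dA: "d \<in> A" using d DA by blast
    have "\<sigma> d = finprod DD (\<lambda>f. d) Phi"
      unfolding \<sigma>_def
    proof (rule DDg.finprod_cong')
      show "(\<lambda>f. d) \<in> Phi \<rightarrow> carrier DD" using d by auto
      fix f assume "f \<in> Phi"
      then obtain t where t: "t \<in> carrier G" "f = Rphi t" unfolding Phi_def by blast
      show "f d = d" using t phid[OF t(1) d] dA unfolding Rphi_def by simp
    qed simp
    also have "... = d [^]\<^bsub>DD\<^esub> card Phi" using DDg.finprod_const d by simp
    also have "... = d [^] n" unfolding n_def DD_def by (simp add: nat_pow_consistent[symmetric])
    finally show ?thesis .
  qed
  define act where "act g f = restrict (\<lambda>a. g \<otimes> f (inv g \<otimes> a \<otimes> g) \<otimes> inv g) A" for g f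
  have actR: "act g (Rphi t) = Rphi (g \<otimes> t)" if g: "g \<in> carrier G" and t: "t \<in> carrier G" for g t
    unfolding act_def Rphi_def
  proof (rule restrict_ext)
    fix a assume a: "a \<in> A"
    show "g \<otimes> restrict (phi t) A (inv g \<otimes> a \<otimes> g) \<otimes> inv g = phi (g \<otimes> t) a"
      using phi_shift[OF g t a] Aconj'[OF g a] by simp
  qed
  have actPhi: "act g ` Phi = Phi" if g: "g \<in> carrier G" for g
  proof
    show "act g ` Phi \<subseteq> Phi" unfolding Phi_def using actR g by auto
    show "Phi \<subseteq> act g ` Phi"
    proof
      fix f assume "f \<in> Phi"
      then obtain t where t: "t \<in> carrier G" "f = Rphi t" unfolding Phi_def by blast
      have "f = act g (Rphi (inv g \<otimes> t))" using t g actR[of g "inv g \<otimes> t"] by (simp add: m_assoc[symmetric])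
      moreover have "Rphi (inv g \<otimes> t) \<in> Phi" unfolding Phi_def using g t by simp
      ultimately show "f \<in> act g ` Phi" by blast
    qed
  qed
  have actinj: "inj_on (act g) Phi" if g: "g \<in> carrier G" for g
    using finite_surj_inj[OF finPhi] actPhi[OF g] by simp
  have fc: "finprod DD (\<lambda>f. g \<otimes> f a \<otimes> inv g) Fs = g \<otimes> finprod DD (\<lambda>f. f a) Fs \<otimes> inv g"
    if g: "g \<in> carrier G" and a: "a \<in> A" and Fs: "finite Fs" "Fs \<subseteq> Phi" for g a Fs
    using Fs
  proof (induction Fs rule: finite_induct)
    case empty then show ?case using g by simp
  next
    case (insert x Fs)
    have f1: "(\<lambda>f. f a) \<in> Fs \<rightarrow> carrier DD" using insert PhiD a by auto
    have f2: "(\<lambda>f. g \<otimes> f a \<otimes> inv g) \<in> Fs \<rightarrow> carrier DD" using insert PhiD a Dconj g by auto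
    have xa: "x a \<in> D" using insert PhiD a by auto
    have P: "finprod DD (\<lambda>f. f a) Fs \<in> D" using DDg.finprod_closed[OF f1] by simp
    have "finprod DD (\<lambda>f. g \<otimes> f a \<otimes> inv g) (insert x Fs) = (g \<otimes> x a \<otimes> inv g) \<otimes> finprod DD (\<lambda>f. g \<otimes> f a \<otimes> inv g) Fs"
      using DDg.finprod_insert[OF insert(1) insert(2) f2] Dconj[OF g xa] by simp
    also have "... = (g \<otimes> x a \<otimes> inv g) \<otimes> (g \<otimes> finprod DD (\<lambda>f. f a) Fs \<otimes> inv g)"
      using insert by simp
    also have "... = g \<otimes> (x a \<otimes> finprod DD (\<lambda>f. f a) Fs) \<otimes> inv g"
    proof -
      have c1: "x a \<in> carrier G" "finprod DD (\<lambda>f. f a) Fs \<in> carrier G" using xa P Dc by auto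
      show ?thesis using conj_mult[OF g c1] by (rule sym)
    qed
    also have "... = g \<otimes> finprod DD (\<lambda>f. f a) (insert x Fs) \<otimes> inv g"
      using DDg.finprod_insert[OF insert(1) insert(2) f1] xa by simp
    finally show ?case .
  qed
  have sig_conj: "\<sigma> (g \<otimes> a \<otimes> inv g) = g \<otimes> \<sigma> a \<otimes> inv g" if g: "g \<in> carrier G" and a: "a \<in> A" for g a
  proof -
    have gaA: "g \<otimes> a \<otimes> inv g \<in> A" using Aconj g a by blast
    have ac: "a \<in> carrier G" using a Ac by blast
    have "\<sigma> (g \<otimes> a \<otimes> inv g) = finprod DD (\<lambda>f. f (g \<otimes> a \<otimes> inv g)) (act g ` Phi)"
      unfolding \<sigma>_def using actPhi[OF g] by simp
    also have "... = finprod DD (\<lambda>f. act g f (g \<otimes> a \<otimes> inv g)) Phi"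
    proof (rule DDg.finprod_reindex)
      show "(\<lambda>f. f (g \<otimes> a \<otimes> inv g)) \<in> act g ` Phi \<rightarrow> carrier DD"
        using actPhi[OF g] PhiF[OF gaA] by simp
      show "inj_on (act g) Phi" using actinj[OF g] .
    qed
    also have "... = finprod DD (\<lambda>f. g \<otimes> f a \<otimes> inv g) Phi"
    proof (rule DDg.finprod_cong')
      show "(\<lambda>f. g \<otimes> f a \<otimes> inv g) \<in> Phi \<rightarrow> carrier DD" using PhiD a Dconj g by auto
      fix f assume "f \<in> Phi"
      have "inv g \<otimes> (g \<otimes> a \<otimes> inv g) \<otimes> g = a" using g ac by (simp add: m_assoc mi2)
      then show "act g f (g \<otimes> a \<otimes> inv g) = g \<otimes> f a \<otimes> inv g" unfolding act_def using gaA by simp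
    qed simp
    also have "... = g \<otimes> \<sigma> a \<otimes> inv g" unfolding \<sigma>_def using fc[OF g a finPhi] by simp
    finally show ?thesis .
  qed
  define S where "S = {a \<in> A. \<sigma> a = \<one>}"
  have sig1: "\<sigma> \<one> = \<one>" using sigd[OF subgroup.one_closed[OF DS]] by simp
  have SA: "S \<subseteq> A" unfolding S_def by blast
  have SS: "subgroup S G"
  proof (rule subgroupI)
    show "S \<subseteq> carrier G" using SA Ac by blast
    show "S \<noteq> {}" unfolding S_def using sig1 subgroup.one_closed[OF AS] by blast
  next
    fix a assume a: "a \<in> S"
    then have aA: "a \<in> A" and s: "\<sigma> a = \<one>" unfolding S_def by auto
    have iA: "inv a \<in> A" using subgroup.m_inv_closed[OF AS aA] .
    have "\<one> = \<sigma> (a \<otimes> inv a)" using aA Ac sig1 by auto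
    also have "... = \<sigma> (inv a)" using sigm[OF aA iA] s sigD[OF iA] Dc by auto
    finally show "inv a \<in> S" unfolding S_def using iA by simp
  next
    fix a b assume "a \<in> S" "b \<in> S"
    then have "a \<in> A" "b \<in> A" "\<sigma> a = \<one>" "\<sigma> b = \<one>" unfolding S_def by auto
    then show "a \<otimes> b \<in> S" unfolding S_def using sigm subgroup.m_closed[OF AS] by simp
  qed
  have SN: "S \<lhd> G" unfolding normal_inv_iff
  proof (intro conjI ballI SS)
    fix g h assume g: "g \<in> carrier G" and h: "h \<in> S"
    then have hA: "h \<in> A" and s: "\<sigma> h = \<one>" unfolding S_def by auto
    have "\<sigma> (g \<otimes> h \<otimes> inv g) = \<one>" using sig_conj[OF g hA] s g by simp
    then show "g \<otimes> h \<otimes> inv g \<in> S" unfolding S_def using Aconj g hA by blast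
  qed
  have eqA: "A = S <#> D"
  proof
    show "S <#> D \<subseteq> A"
    proof
      fix z assume "z \<in> S <#> D"
      then obtain s d where "s \<in> S" "d \<in> D" "z = s \<otimes> d" unfolding set_mult_def by blast
      then show "z \<in> A" using subgroup.m_closed[OF AS] SA DA by blast
    qed
    show "A \<subseteq> S <#> D"
    proof
      fix a assume a: "a \<in> A"
      obtain e where eD: "e \<in> D" and en: "e [^] n = \<sigma> a" using Ddiv[OF sigD[OF a] n1] by blast
      have eA: "e \<in> A" using eD DA by blast
      have ec: "e \<in> carrier G" using eD Dc by blast
      have ac: "a \<in> carrier G" using a Ac by blast
      define s where "s = a \<otimes> inv e"
      have sA: "s \<in> A" unfolding s_def using subgroup.m_closed[OF AS a subgroup.m_inv_closed[OF AS eA]] .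
      have ase: "a = s \<otimes> e" unfolding s_def using ac ec by (simp add: m_assoc)
      have "\<sigma> a = \<sigma> s \<otimes> \<sigma> a" using sigm[OF sA eA] ase sigd[OF eD] en by simp
      then have "\<sigma> s = \<one>" using sigD[OF sA] sigD[OF a] Dc by (metis r_cancel_one' subsetD)
      then have "s \<in> S" unfolding S_def using sA by blast
      then show "a \<in> S <#> D" unfolding set_mult_def using ase eD by blast
    qed
  qed
  have "S \<inter> D \<subseteq> {d \<in> D. d [^] n = \<one>}" unfolding S_def using sigd by auto
  moreover have "finite {d \<in> D. d [^] n = \<one>}"
    using chernikov_torsion_finite[OF assms(7) _ n1] Acomm DA by blast
  ultimately have "finite (S \<inter> D)" using finite_subset by blast
  then show ?thesis using SA SN eqA by blast
qed

theorem lemma2p5: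
  fixes G :: "('a, 'b) monoid_scheme" and p :: nat and A D :: "'a set"
  assumes "Factorial_Ring.prime p"
    and "p_group p G"
    and "A \<lhd> G" and "commutative_subgroup A G"
    and "finite (rcosets\<^bsub>G\<^esub> (centralizer G A))"
    and "D \<subseteq> A" and "D \<lhd> G"
    and "divisible_subgroup D G" and "chernikov_subgroup D G"
  shows "\<exists>S. S \<subseteq> A \<and> S \<lhd> G \<and> A = S <#>\<^bsub>G\<^esub> D \<and> finite (S \<inter> D)"
proof -
  have grp: "group G" using assms(2) unfolding p_group_def by blast
  show ?thesis using group.main_aux[OF grp assms(3) assms(4) assms(5) assms(6) assms(7) assms(8) assms(9)] .
qed

end
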